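(* Let $\mathfrak g=\mathfrak g_{-1}\oplus\mathfrak g_0\oplus\mathfrak g_1$ be a complex Lie superalgebra with $\dim\mathfrak g_{\bar1}<\infty$ and compatible $\mathbb Z$-grading, and let $V$ be a simple $\mathfrak g_0$-supermodule. Then every non-zero $\mathfrak g$-submodule of $K(V)$ contains $\Lambda^{\max}(\mathfrak g_{-1})\otimes V$; in particular $\mathrm{Soc}(K(V))=U(\mathfrak g)\cdot(\Lambda^{\max}(\mathfrak g_{-1})\otimes V)$, and this socle is simple. Similarly, $K'(V)$ has simple socle. In particular, both $K(V)$ and $K'(V)$ are indecomposable.
   Context: Compatible grading: $\mathfrak g_0=\mathfrak g_{\bar0}$, $\mathfrak g_{\bar1}=\mathfrak g_{-1}\oplus\mathfrak g_1$, $\mathfrak g_{\pm1}$ $\mathfrak g_0$-submodules, $[\mathfrak g_{\pm1},\mathfrak g_{\pm1}]=0$. Supermodule homomorphisms are even. $K(V)=U(\mathfrak g)\otimes_{U(\mathfrak g_0\oplus\mathfrak g_1)}V$ with $\mathfrak g_1V=0$, identified as a vector space with $\Lambda(\mathfrak g_{-1})\otimes V$; $K'(V)=U(\mathfrak g)\otimes_{U(\mathfrak g_0\oplus\mathfrak g_{-1})}V$ with $\mathfrak g_{-1}V=0$. $\Lambda^{\max}$ is the top exterior power. *)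

theory Defs
  imports Complex_Main
begin

text \<open>Complex vector spaces are types of class ab_group_add together with an explicit
  scalar multiplication by complex numbers satisfying the vector space axioms.
  Parities are encoded by bool: False = even (0-bar), True = odd (1-bar).\<close>

definition sign_par :: "bool \<Rightarrow> bool \<Rightarrow> 'a::ab_group_add \<Rightarrow> 'a" where
  "sign_par d e x = (if d \<and> e then - x else x)"   \<comment> \<open>(-1)^(|x||y|) times x\<close>

definition sum_set :: "'a::ab_group_add set \<Rightarrow> 'a set \<Rightarrow> 'a set" where
  "sum_set A B = {a + b | a b. a \<in> A \<and> b \<in> B}"

text \<open>Homogeneous part of parity d of g = g_-1 + g_0 + g_1 (g_0bar = g_0, g_1bar = g_-1 + g_1).\<close>
definition gpar :: "'g::ab_group_add set \<Rightarrow> 'g set \<Rightarrow> 'g set \<Rightarrow> bool \<Rightarrow> 'g set" where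
  "gpar gm g0 gp d = (if d then sum_set gm gp else g0)"

definition graded_lie_superalgebra ::
  "(complex \<Rightarrow> 'g::ab_group_add \<Rightarrow> 'g) \<Rightarrow> ('g \<Rightarrow> 'g \<Rightarrow> 'g) \<Rightarrow> 'g set \<Rightarrow> 'g set \<Rightarrow> 'g set \<Rightarrow> bool" where
  "graded_lie_superalgebra sg br gm g0 gp \<longleftrightarrow>
     vector_space sg \<and>
     module.subspace sg gm \<and> module.subspace sg g0 \<and> module.subspace sg gp \<and>
     (\<forall>x. \<exists>!t. fst t \<in> gm \<and> fst (snd t) \<in> g0 \<and> snd (snd t) \<in> gp \<and>
            x = fst t + fst (snd t) + snd (snd t)) \<and>
     (\<forall>x y z. br (x + y) z = br x z + br y z) \<and>
     (\<forall>x y z. br x (y + z) = br x y + br x z) \<and>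
     (\<forall>c x y. br (sg c x) y = sg c (br x y)) \<and>
     (\<forall>c x y. br x (sg c y) = sg c (br x y)) \<and>
     (\<forall>d e. \<forall>x \<in> gpar gm g0 gp d. \<forall>y \<in> gpar gm g0 gp e.
        br x y = - sign_par d e (br y x)) \<and>
     (\<forall>d e f. \<forall>x \<in> gpar gm g0 gp d. \<forall>y \<in> gpar gm g0 gp e. \<forall>z \<in> gpar gm g0 gp f.
        br x (br y z) = br (br x y) z + sign_par d e (br y (br x z))) \<and>
     (\<forall>x \<in> g0. \<forall>y \<in> g0. br x y \<in> g0) \<and>
     (\<forall>x \<in> g0. \<forall>y \<in> gm. br x y \<in> gm) \<and>
     (\<forall>x \<in> g0. \<forall>y \<in> gp. br x y \<in> gp) \<and>
     (\<forall>x \<in> gm. \<forall>y \<in> gp. br x y \<in> g0) \<and>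
     (\<forall>x \<in> gm. \<forall>y \<in> gm. br x y = 0) \<and>
     (\<forall>x \<in> gp. \<forall>y \<in> gp. br x y = 0)"

definition finite_dim :: "(complex \<Rightarrow> 'a::ab_group_add \<Rightarrow> 'a) \<Rightarrow> 'a set \<Rightarrow> bool" where
  "finite_dim s S \<longleftrightarrow> (\<exists>B. finite B \<and> B \<subseteq> S \<and> module.span s B = S)"

definition mpar :: "'m set \<Rightarrow> 'm set \<Rightarrow> bool \<Rightarrow> 'm set" where
  "mpar M0 M1 d = (if d then M1 else M0)"

text \<open>A supermodule (on the whole type 'm, with grading M0 + M1) over the Lie sub-superalgebra
  of g with even part Ev and odd part Od.\<close>
definition supermodule ::
  "(complex \<Rightarrow> 'g::ab_group_add \<Rightarrow> 'g) \<Rightarrow> ('g \<Rightarrow> 'g \<Rightarrow> 'g) \<Rightarrow> 'g set \<Rightarrow> 'g set \<Rightarrow>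
   (complex \<Rightarrow> 'm::ab_group_add \<Rightarrow> 'm) \<Rightarrow> 'm set \<Rightarrow> 'm set \<Rightarrow> ('g \<Rightarrow> 'm \<Rightarrow> 'm) \<Rightarrow> bool" where
  "supermodule sg br Ev Od sm M0 M1 act \<longleftrightarrow>
     vector_space sm \<and> module.subspace sm M0 \<and> module.subspace sm M1 \<and>
     M0 \<inter> M1 = {0} \<and> sum_set M0 M1 = UNIV \<and>
     (\<forall>x \<in> sum_set Ev Od. \<forall>y \<in> sum_set Ev Od. \<forall>m. act (x + y) m = act x m + act y m) \<and>
     (\<forall>x \<in> sum_set Ev Od. \<forall>c m. act (sg c x) m = sm c (act x m)) \<and>
     (\<forall>x \<in> sum_set Ev Od. \<forall>m n. act x (m + n) = act x m + act x n) \<and>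
     (\<forall>x \<in> sum_set Ev Od. \<forall>c m. act x (sm c m) = sm c (act x m)) \<and>
     (\<forall>d e. \<forall>x \<in> (if d then Od else Ev). act x ` mpar M0 M1 e \<subseteq> mpar M0 M1 (d \<noteq> e)) \<and>
     (\<forall>d e. \<forall>x \<in> (if d then Od else Ev). \<forall>y \<in> (if e then Od else Ev). \<forall>m.
        act (br x y) m = act x (act y m) - sign_par d e (act y (act x m)))"

definition sub_supermodule ::
  "'g::ab_group_add set \<Rightarrow> (complex \<Rightarrow> 'm::ab_group_add \<Rightarrow> 'm) \<Rightarrow> 'm set \<Rightarrow> 'm set \<Rightarrow>
   ('g \<Rightarrow> 'm \<Rightarrow> 'm) \<Rightarrow> 'm set \<Rightarrow> bool" where
  "sub_supermodule L sm M0 M1 act N \<longleftrightarrow>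
     module.subspace sm N \<and> (\<forall>x \<in> L. act x ` N \<subseteq> N) \<and> N = sum_set (N \<inter> M0) (N \<inter> M1)"

definition simple_sub ::
  "'g::ab_group_add set \<Rightarrow> (complex \<Rightarrow> 'm::ab_group_add \<Rightarrow> 'm) \<Rightarrow> 'm set \<Rightarrow> 'm set \<Rightarrow>
   ('g \<Rightarrow> 'm \<Rightarrow> 'm) \<Rightarrow> 'm set \<Rightarrow> bool" where
  "simple_sub L sm M0 M1 act N \<longleftrightarrow>
     sub_supermodule L sm M0 M1 act N \<and> N \<noteq> {0} \<and>
     (\<forall>N'. sub_supermodule L sm M0 M1 act N' \<and> N' \<subseteq> N \<longrightarrow> N' = {0} \<or> N' = N)"

definition simple_supermodule ::
  "(complex \<Rightarrow> 'g::ab_group_add \<Rightarrow> 'g) \<Rightarrow> ('g \<Rightarrow> 'g \<Rightarrow> 'g) \<Rightarrow> 'g set \<Rightarrow> 'g set \<Rightarrow>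
   (complex \<Rightarrow> 'm::ab_group_add \<Rightarrow> 'm) \<Rightarrow> 'm set \<Rightarrow> 'm set \<Rightarrow> ('g \<Rightarrow> 'm \<Rightarrow> 'm) \<Rightarrow> bool" where
  "simple_supermodule sg br Ev Od sm M0 M1 act \<longleftrightarrow>
     supermodule sg br Ev Od sm M0 M1 act \<and> simple_sub (sum_set Ev Od) sm M0 M1 act UNIV"

definition socle ::
  "'g::ab_group_add set \<Rightarrow> (complex \<Rightarrow> 'm::ab_group_add \<Rightarrow> 'm) \<Rightarrow> 'm set \<Rightarrow> 'm set \<Rightarrow>
   ('g \<Rightarrow> 'm \<Rightarrow> 'm) \<Rightarrow> 'm set" where
  "socle L sm M0 M1 act = module.span sm (\<Union>{N. simple_sub L sm M0 M1 act N})"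

text \<open>U(g) . X: the smallest sub-supermodule containing X.\<close>
definition generated_sub ::
  "'g::ab_group_add set \<Rightarrow> (complex \<Rightarrow> 'm::ab_group_add \<Rightarrow> 'm) \<Rightarrow> 'm set \<Rightarrow> 'm set \<Rightarrow>
   ('g \<Rightarrow> 'm \<Rightarrow> 'm) \<Rightarrow> 'm set \<Rightarrow> 'm set" where
  "generated_sub L sm M0 M1 act X = \<Inter>{N. sub_supermodule L sm M0 M1 act N \<and> X \<subseteq> N}"

definition indecomposable ::
  "'g::ab_group_add set \<Rightarrow> (complex \<Rightarrow> 'm::ab_group_add \<Rightarrow> 'm) \<Rightarrow> 'm set \<Rightarrow> 'm set \<Rightarrow>
   ('g \<Rightarrow> 'm \<Rightarrow> 'm) \<Rightarrow> bool" where
  "indecomposable L sm M0 M1 act \<longleftrightarrow>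
     (UNIV :: 'm set) \<noteq> {0} \<and>
     \<not> (\<exists>N1 N2. sub_supermodule L sm M0 M1 act N1 \<and> sub_supermodule L sm M0 M1 act N2 \<and>
          N1 \<noteq> {0} \<and> N2 \<noteq> {0} \<and> N1 \<inter> N2 = {0} \<and> sum_set N1 N2 = UNIV)"

text \<open>Ordered product y_S . w = y_{i1} (y_{i2} ( ... (y_{ik} w))) for S = {i1 < ... < ik}.\<close>
definition yprod :: "('g \<Rightarrow> 'm \<Rightarrow> 'm) \<Rightarrow> 'g list \<Rightarrow> nat set \<Rightarrow> 'm \<Rightarrow> 'm" where
  "yprod act ys S w = foldr (\<lambda>i. act (ys ! i)) (sorted_list_of_set S) w"

text \<open>The induced module U(g) \<otimes>_{U(g_0 + Ann)} V, where Ann V = 0, given (via PBW) as a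
  g-supermodule M with an even g_0-embedding iota of V such that M is free over
  Lambda(Cre) on iota(V), i.e. M = Lambda(Cre) \<otimes> V as a vector space.
  For K(V): Ann = g_1, Cre = g_-1; for K'(V): Ann = g_-1, Cre = g_1.\<close>
definition induced_module ::
  "(complex \<Rightarrow> 'g::ab_group_add \<Rightarrow> 'g) \<Rightarrow> ('g \<Rightarrow> 'g \<Rightarrow> 'g) \<Rightarrow> 'g set \<Rightarrow> 'g set \<Rightarrow> 'g set \<Rightarrow>
   (complex \<Rightarrow> 'v::ab_group_add \<Rightarrow> 'v) \<Rightarrow> 'v set \<Rightarrow> 'v set \<Rightarrow> ('g \<Rightarrow> 'v \<Rightarrow> 'v) \<Rightarrow>
   (complex \<Rightarrow> 'm::ab_group_add \<Rightarrow> 'm) \<Rightarrow> 'm set \<Rightarrow> 'm set \<Rightarrow> ('g \<Rightarrow> 'm \<Rightarrow> 'm) \<Rightarrow>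
   ('v \<Rightarrow> 'm) \<Rightarrow> bool" where
  "induced_module sg br Cre g0 Ann sv V0 V1 rho sm M0 M1 act iota \<longleftrightarrow>
     supermodule sg br g0 (sum_set Cre Ann) sm M0 M1 act \<and>
     Vector_Spaces.linear sv sm iota \<and>
     iota ` V0 \<subseteq> M0 \<and> iota ` V1 \<subseteq> M1 \<and>
     (\<forall>x \<in> g0. \<forall>v. act x (iota v) = iota (rho x v)) \<and>
     (\<forall>x \<in> Ann. \<forall>v. act x (iota v) = 0) \<and>
     (\<exists>ys. distinct ys \<and> module.independent sg (set ys) \<and> module.span sg (set ys) = Cre \<and>
        (\<forall>m. \<exists>!f :: nat set \<Rightarrow> 'v.
           (\<forall>S. S \<notin> Pow {..<length ys} \<longrightarrow> f S = 0) \<and>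
           m = (\<Sum>S \<in> Pow {..<length ys}. yprod act ys S (iota (f S)))))"

text \<open>Lambda^max(Cre) \<otimes> V inside the induced module: span of all y_1 ... y_n . iota(v)
  with y_i \<in> Cre and n = dim Cre.\<close>
definition top_part ::
  "(complex \<Rightarrow> 'g::ab_group_add \<Rightarrow> 'g) \<Rightarrow> 'g set \<Rightarrow> (complex \<Rightarrow> 'm::ab_group_add \<Rightarrow> 'm) \<Rightarrow>
   ('g \<Rightarrow> 'm \<Rightarrow> 'm) \<Rightarrow> ('v \<Rightarrow> 'm) \<Rightarrow> 'm set" where
  "top_part sg Cre sm act iota =
     module.span sm {foldr act ys (iota v) | ys v.
        length ys = vector_space.dim sg Cre \<and> set ys \<subseteq> Cre}"

end

theory Submission imports Defs begin

lemma mem_eq: "A = B \<Longrightarrow> a \<in> A \<Longrightarrow> a \<in> B" by simp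

lemma sum_setI: "a \<in> A \<Longrightarrow> b \<in> B \<Longrightarrow> a + b \<in> sum_set A B"
  unfolding sum_set_def by blast

definition pm :: "'a::ab_group_add \<Rightarrow> 'a \<Rightarrow> bool" where "pm a b \<longleftrightarrow> a = b \<or> a = - b"

lemma pm_refl: "pm a a" by (simp add: pm_def)
lemma pm_neg: "pm a b \<Longrightarrow> pm (- a) b" by (auto simp: pm_def)
lemma pm_trans: "pm a b \<Longrightarrow> pm b c \<Longrightarrow> pm a c" by (auto simp: pm_def)
lemma pm_zero: "pm a 0 \<Longrightarrow> a = 0" by (auto simp: pm_def)

locale core =
  VM: vector_space sm + VG: vector_space sg + VV: vector_space sv
  for sm :: "complex \<Rightarrow> 'm::ab_group_add \<Rightarrow> 'm"
  and sg :: "complex \<Rightarrow> 'g::ab_group_add \<Rightarrow> 'g"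
  and sv :: "complex \<Rightarrow> 'v::ab_group_add \<Rightarrow> 'v" +
  fixes br :: "'g \<Rightarrow> 'g \<Rightarrow> 'g" and Cre g0 Ann :: "'g set"
    and V0 V1 :: "'v set" and rho :: "'g \<Rightarrow> 'v \<Rightarrow> 'v"
    and M0 M1 :: "'m set" and act :: "'g \<Rightarrow> 'm \<Rightarrow> 'm" and iota :: "'v \<Rightarrow> 'm"
    and ys :: "'g list"
  assumes SM: "supermodule sg br g0 (sum_set Cre Ann) sm M0 M1 act"
    and lin: "Vector_Spaces.linear sv sm iota"
    and iV0: "iota ` V0 \<subseteq> M0" and iV1: "iota ` V1 \<subseteq> M1"
    and g0act: "\<forall>x \<in> g0. \<forall>v. act x (iota v) = iota (rho x v)"
    and ysd: "distinct ys" and ysi: "VG.independent (set ys)" and yss: "VG.span (set ys) = Cre"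
    and uniq: "\<forall>m. \<exists>!f :: nat set \<Rightarrow> 'v.
           (\<forall>S. S \<notin> Pow {..<length ys} \<longrightarrow> f S = 0) \<and>
           m = (\<Sum>S \<in> Pow {..<length ys}. yprod act ys S (iota (f S)))"
    and V: "simple_supermodule sg br g0 {0} sv V0 V1 rho"
    and z0: "0 \<in> g0" and zA: "0 \<in> Ann"
    and brCC: "\<forall>x\<in>Cre. \<forall>y\<in>Cre. br x y = 0"
    and brg0: "\<forall>x\<in>g0. \<forall>y\<in>Cre. br x y \<in> Cre"
begin

abbreviation "Lset \<equiv> sum_set g0 (sum_set Cre Ann)"
abbreviation "n \<equiv> length ys"
abbreviation "Y S w \<equiv> yprod act ys S w"

lemma Cre_L: "x \<in> Cre \<Longrightarrow> x \<in> Lset"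
  using sum_setI[OF z0 sum_setI[OF _ zA], of x] by simp

lemma c0: "0 \<in> Cre" using VG.span_zero yss by blast

lemma g0_L: "x \<in> g0 \<Longrightarrow> x \<in> Lset"
  using sum_setI[OF _ sum_setI[OF c0 zA], of x g0] by simp

lemma Cre_Od: "x \<in> Cre \<Longrightarrow> x \<in> sum_set Cre Ann"
  using sum_setI[OF _ zA, of x] by simp

lemma ys_Cre: "set ys \<subseteq> Cre" using VG.span_superset yss by blast

lemma ysj: "j < n \<Longrightarrow> ys ! j \<in> Cre" using ys_Cre by auto


lemma SM_M0: "VM.subspace M0"
  using SM unfolding supermodule_def by (elim conjE) assumption
lemma SM_M1: "VM.subspace M1"
  using SM unfolding supermodule_def by (elim conjE) assumption
lemma SM_M01: "M0 \<inter> M1 = {0}"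
  using SM unfolding supermodule_def by (elim conjE) assumption
lemma SM_MU: "sum_set M0 M1 = UNIV"
  using SM unfolding supermodule_def by (elim conjE) assumption

lemma SM_addg: "\<forall>x \<in> Lset. \<forall>y \<in> Lset. \<forall>m. act (x + y) m = act x m + act y m"
  using SM unfolding supermodule_def by (elim conjE) assumption
lemma SM_scaleg: "\<forall>x \<in> Lset. \<forall>c m. act (sg c x) m = sm c (act x m)"
  using SM unfolding supermodule_def by (elim conjE) assumption
lemma SM_add: "\<forall>x \<in> Lset. \<forall>m n. act x (m + n) = act x m + act x n"
  using SM unfolding supermodule_def by (elim conjE) assumption
lemma SM_scale: "\<forall>x \<in> Lset. \<forall>c m. act x (sm c m) = sm c (act x m)"
  using SM unfolding supermodule_def by (elim conjE) assumption
lemma SM_par: "\<forall>d e. \<forall>x \<in> (if d then sum_set Cre Ann else g0). act x ` mpar M0 M1 e \<subseteq> mpar M0 M1 (d \<noteq> e)"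
  using SM unfolding supermodule_def by (elim conjE) assumption
lemma SM_rel: "\<forall>d e. \<forall>x \<in> (if d then sum_set Cre Ann else g0). \<forall>y \<in> (if e then sum_set Cre Ann else g0). \<forall>m.
        act (br x y) m = act x (act y m) - sign_par d e (act y (act x m))"
  using SM unfolding supermodule_def by (elim conjE) assumption

lemma act_add: "x \<in> Lset \<Longrightarrow> act x (a + b) = act x a + act x b"
  using SM_add by blast
lemma act_scale: "x \<in> Lset \<Longrightarrow> act x (sm c a) = sm c (act x a)"
  using SM_scale by blast
lemma act_addg: "x \<in> Lset \<Longrightarrow> y \<in> Lset \<Longrightarrow> act (x + y) a = act x a + act y a"
  using SM_addg by blast
lemma act_scaleg: "x \<in> Lset \<Longrightarrow> act (sg c x) a = sm c (act x a)"
  using SM_scaleg by blast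
lemma act_zero: "x \<in> Lset \<Longrightarrow> act x 0 = 0"
  using act_add[of x 0 0] by simp
lemma act_neg: "x \<in> Lset \<Longrightarrow> act x (- a) = - act x a"
  using act_add[of x a "-a"] act_zero[of x] minus_unique[of "act x a" "act x (-a)"] by simp
lemma act_diff: "x \<in> Lset \<Longrightarrow> act x (a - b) = act x a - act x b"
  using act_add[of x a "-b"] act_neg[of x b] by simp
lemma act_sum: "x \<in> Lset \<Longrightarrow> act x (sum f A) = (\<Sum>a\<in>A. act x (f a))"
  by (induct A rule: infinite_finite_induct) (simp_all add: act_zero act_add)
lemma act_0g: "act 0 a = 0"
  using act_addg[of 0 0 a] Cre_L[OF c0] by simp

lemma anti: "x \<in> Cre \<Longrightarrow> y \<in> Cre \<Longrightarrow> act x (act y m) = - act y (act x m)"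
proof -
  assume x: "x \<in> Cre" and y: "y \<in> Cre"
  have "act (br x y) m = act x (act y m) - sign_par True True (act y (act x m))"
    using SM_rel Cre_Od[OF x] Cre_Od[OF y] by simp
  then show ?thesis using brCC x y act_0g by (simp add: sign_par_def eq_neg_iff_add_eq_0)
qed

lemma twice: "x \<in> Cre \<Longrightarrow> act x (act x m) = 0"
proof -
  assume x: "x \<in> Cre"
  let ?a = "act x (act x m)"
  have "?a + ?a = 0" using anti[OF x x, of m] by (metis add.right_inverse)
  then have "sm (1/2) (?a + ?a) = 0" by simp
  then have "sm (1/2) ?a + sm (1/2) ?a = 0" by (simp only: VM.scale_right_distrib)
  then have "sm (1/2 + 1/2) ?a = 0" by (simp only: VM.scale_left_distrib)
  then show ?thesis by simp
qed

lemma comm: "x \<in> g0 \<Longrightarrow> z \<in> Cre \<Longrightarrow> act x (act z m) = act z (act x m) + act (br x z) m"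
proof -
  assume x: "x \<in> g0" and z: "z \<in> Cre"
  have "act (br x z) m = act x (act z m) - sign_par False True (act z (act x m))"
    using SM_rel x Cre_Od[OF z] by simp
  then show ?thesis by (simp add: sign_par_def)
qed

lemma par: "z \<in> Cre \<Longrightarrow> a \<in> mpar M0 M1 e \<Longrightarrow> act z a \<in> mpar M0 M1 (\<not> e)"
proof -
  assume z: "z \<in> Cre" and a: "a \<in> mpar M0 M1 e"
  have "act z ` mpar M0 M1 e \<subseteq> mpar M0 M1 (True \<noteq> e)" using SM_par[THEN spec[where x=True], THEN spec[where x=e]] Cre_Od[OF z] by simp
  then show ?thesis using a by auto
qed


abbreviation "FF l w \<equiv> foldr (\<lambda>i. act (ys ! i)) l w"

lemma Y_def: "Y S w = FF (sorted_list_of_set S) w" by (simp add: yprod_def)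

lemma ysL: "j < n \<Longrightarrow> ys ! j \<in> Lset" using Cre_L ysj by blast

lemma pm_act: "x \<in> Lset \<Longrightarrow> pm a b \<Longrightarrow> pm (act x a) (act x b)"
  by (auto simp: pm_def act_neg)

lemma A_list: "sorted l \<Longrightarrow> distinct l \<Longrightarrow> set l \<subseteq> {..<n} \<Longrightarrow> j < n \<Longrightarrow>
  (j \<in> set l \<longrightarrow> act (ys!j) (FF l w) = 0) \<and>
  (j \<notin> set l \<longrightarrow> pm (act (ys!j) (FF l w)) (FF (insort j l) w))"
proof (induction l)
  case Nil
  then show ?case by (simp add: pm_refl)
next
  case (Cons a l)
  have a: "a < n" and ln: "set l \<subseteq> {..<n}" using Cons.prems by auto
  have sl: "sorted l" "distinct l" using Cons.prems by auto
  have ge: "\<forall>x\<in>set l. a < x" using Cons.prems by (auto simp: order_less_le)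
  let ?X = "FF l w"
  have e: "FF (a # l) w = act (ys!a) ?X" by simp
  show ?case
  proof (cases "j = a")
    case True
    then show ?thesis using twice[OF ysj[OF a]] by simp
  next
    case False
    show ?thesis
    proof (cases "j < a")
      case True
      then have "j \<notin> set (a # l)" using ge by auto
      moreover have "insort j (a # l) = j # a # l" using True by simp
      ultimately show ?thesis by (simp add: pm_refl)
    next
      case ja: False
      with False have ja': "a < j" by simp
      have an: "act (ys!j) (act (ys!a) ?X) = - act (ys!a) (act (ys!j) ?X)"
        using anti[OF ysj[OF Cons.prems(4)] ysj[OF a]] .
      have ins: "insort j (a # l) = a # insort j l" using ja' by simp
      have IH: "(j \<in> set l \<longrightarrow> act (ys!j) ?X = 0) \<and>
        (j \<notin> set l \<longrightarrow> pm (act (ys!j) ?X) (FF (insort j l) w))"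
        using Cons.IH[OF sl ln Cons.prems(4)] .
      show ?thesis
      proof (cases "j \<in> set l")
        case True
        then show ?thesis using IH an act_zero[OF ysL[OF a]] by simp
      next
        case jl: False
        have "pm (act (ys!a) (act (ys!j) ?X)) (act (ys!a) (FF (insort j l) w))"
          using pm_act[OF ysL[OF a]] IH jl by blast
        then have "pm (act (ys!j) (act (ys!a) ?X)) (act (ys!a) (FF (insort j l) w))"
          unfolding an by (rule pm_neg)
        then show ?thesis using jl False ins by simp
      qed
    qed
  qed
qed

lemma A_set: "S \<subseteq> {..<n} \<Longrightarrow> j < n \<Longrightarrow>
  (j \<in> S \<longrightarrow> act (ys!j) (Y S w) = 0) \<and>
  (j \<notin> S \<longrightarrow> pm (act (ys!j) (Y S w)) (Y (insert j S) w))"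
proof -
  assume S: "S \<subseteq> {..<n}" and j: "j < n"
  have fS: "finite S" using S finite_subset by blast
  have "(j \<in> set (sorted_list_of_set S) \<longrightarrow> act (ys!j) (FF (sorted_list_of_set S) w) = 0) \<and>
  (j \<notin> set (sorted_list_of_set S) \<longrightarrow> pm (act (ys!j) (FF (sorted_list_of_set S) w)) (FF (insort j (sorted_list_of_set S)) w))"
    by (rule A_list) (use S fS j in auto)
  then show ?thesis using fS by (simp add: Y_def sorted_list_of_set_insert)
qed

lemma Y_zero: "S \<subseteq> {..<n} \<Longrightarrow> Y S 0 = 0"
proof -
  assume S: "S \<subseteq> {..<n}"
  have fS: "finite S" using S finite_subset by blast
  have "\<And>l. set l \<subseteq> {..<n} \<Longrightarrow> FF l 0 = 0"
  proof -
    fix l show "set l \<subseteq> {..<n} \<Longrightarrow> FF l 0 = 0"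
      by (induction l) (auto simp: act_zero ysL)
  qed
  then show ?thesis using S fS by (simp add: Y_def)
qed

lemma FF_L: "set l \<subseteq> {..<n} \<Longrightarrow> FF l (a + b) = FF l a + FF l b"
  by (induction l) (auto simp: act_add ysL)
lemma FF_scale: "set l \<subseteq> {..<n} \<Longrightarrow> FF l (sm c a) = sm c (FF l a)"
  by (induction l) (auto simp: act_scale ysL)
lemma FF_neg: "set l \<subseteq> {..<n} \<Longrightarrow> FF l (- a) = - FF l a"
  by (induction l) (auto simp: act_neg ysL)
lemma FF_sum: "set l \<subseteq> {..<n} \<Longrightarrow> FF l (sum f A) = (\<Sum>a\<in>A. FF l (f a))"
  by (induction l) (auto simp: act_sum ysL)
lemma FF_pm: "set l \<subseteq> {..<n} \<Longrightarrow> pm a b \<Longrightarrow> pm (FF l a) (FF l b)"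
  by (auto simp: pm_def FF_neg)

lemma B_list: "distinct l \<Longrightarrow> set l \<subseteq> {..<n} \<Longrightarrow> S \<subseteq> {..<n} \<Longrightarrow>
  (set l \<inter> S \<noteq> {} \<longrightarrow> FF l (Y S w) = 0) \<and>
  (set l \<inter> S = {} \<longrightarrow> pm (FF l (Y S w)) (Y (set l \<union> S) w))"
proof (induction l)
  case Nil
  then show ?case by (simp add: pm_refl)
next
  case (Cons a l)
  have a: "a < n" and ln: "set l \<subseteq> {..<n}" and dl: "distinct l" and al: "a \<notin> set l"
    using Cons.prems by auto
  note IH = Cons.IH[OF dl ln Cons.prems(3)]
  show ?case
  proof (cases "set l \<inter> S = {}")
    case False
    then show ?thesis using IH act_zero[OF ysL[OF a]] by auto
  next
    case True
    have p1: "pm (act (ys!a) (FF l (Y S w))) (act (ys!a) (Y (set l \<union> S) w))"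
      using pm_act[OF ysL[OF a]] IH True by blast
    have lS: "set l \<union> S \<subseteq> {..<n}" using ln Cons.prems(3) by auto
    note A = A_set[OF lS a, of w]
    show ?thesis
    proof (cases "a \<in> S")
      case True
      then have "act (ys!a) (Y (set l \<union> S) w) = 0" using A by auto
      then show ?thesis using p1 True pm_zero by auto
    next
      case False
      then have "pm (act (ys!a) (Y (set l \<union> S) w)) (Y (insert a (set l \<union> S)) w)"
        using A al by auto
      then show ?thesis using p1 False True pm_trans by auto
    qed
  qed
qed


lemma span_act: "z \<in> Lset \<Longrightarrow> (\<And>p. p \<in> P \<Longrightarrow> act z p \<in> VM.span Q) \<Longrightarrow> X \<in> VM.span P \<Longrightarrow>
   act z X \<in> VM.span Q"
proof -
  assume z: "z \<in> Lset" and h: "\<And>p. p \<in> P \<Longrightarrow> act z p \<in> VM.span Q" and X: "X \<in> VM.span P"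
  have sub: "VM.subspace {X. act z X \<in> VM.span Q}"
    by (rule VM.subspaceI) (auto simp: act_zero[OF z] act_add[OF z] act_scale[OF z]
        VM.span_zero VM.span_add VM.span_scale)
  show ?thesis using VM.span_induct[OF X sub] h by blast
qed

lemma Cre_sub: "VG.subspace Cre" using VG.subspace_span yss by metis

lemma span_z: "(\<And>y. y \<in> set ys \<Longrightarrow> act y m \<in> VM.span Q) \<Longrightarrow> z \<in> Cre \<Longrightarrow> act z m \<in> VM.span Q"
proof -
  assume h: "\<And>y. y \<in> set ys \<Longrightarrow> act y m \<in> VM.span Q" and z: "z \<in> Cre"
  let ?Z = "{z. z \<in> Cre \<and> act z m \<in> VM.span Q}"
  have sub: "VG.subspace ?Z"
  proof (rule VG.subspaceI)
    show "0 \<in> ?Z" using c0 act_0g VM.span_zero by simp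
  next
    fix x y assume "x \<in> ?Z" "y \<in> ?Z"
    then show "x + y \<in> ?Z" using VG.subspace_add[OF Cre_sub] act_addg[OF Cre_L Cre_L] VM.span_add
      by auto
  next
    fix c x assume "x \<in> ?Z"
    then show "sg c x \<in> ?Z" using VG.subspace_scale[OF Cre_sub] act_scaleg[OF Cre_L] VM.span_scale
      by auto
  qed
  have "set ys \<subseteq> ?Z" using h ys_Cre by auto
  then have "VG.span (set ys) \<subseteq> ?Z" using VG.span_minimal sub by blast
  then show ?thesis using z yss by auto
qed

definition PP :: "nat \<Rightarrow> 'm \<Rightarrow> 'm set" where
  "PP k w = {Y S' w | S'. S' \<subseteq> {..<n} \<and> card S' = k}"

lemma step_span: "z \<in> Cre \<Longrightarrow> X \<in> VM.span (PP k w) \<Longrightarrow> act z X \<in> VM.span (PP (Suc k) w)"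
proof -
  assume z: "z \<in> Cre" and X: "X \<in> VM.span (PP k w)"
  show ?thesis
  proof (rule span_act[OF Cre_L[OF z] _ X])
    fix p assume "p \<in> PP k w"
    then obtain S' where p: "p = Y S' w" and S': "S' \<subseteq> {..<n}" "card S' = k"
      unfolding PP_def by blast
    have fS: "finite S'" using S' finite_subset by blast
    show "act z p \<in> VM.span (PP (Suc k) w)"
    proof (rule span_z[OF _ z])
      fix y assume "y \<in> set ys"
      then obtain j where j: "j < n" "y = ys ! j" by (metis in_set_conv_nth)
      note A = A_set[OF S'(1) j(1), of w]
      show "act y p \<in> VM.span (PP (Suc k) w)"
      proof (cases "j \<in> S'")
        case True
        then show ?thesis using A j p VM.span_zero by simp
      next
        case False
        have "Y (insert j S') w \<in> PP (Suc k) w" unfolding PP_def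
          using S' False fS j by auto
        then have "Y (insert j S') w \<in> VM.span (PP (Suc k) w)" by (rule VM.span_base)
        then show ?thesis using A False j p VM.span_neg unfolding pm_def by auto
      qed
    qed
  qed
qed

lemma C_list: "set zs \<subseteq> Cre \<Longrightarrow> X \<in> VM.span (PP k w) \<Longrightarrow>
   foldr act zs X \<in> VM.span (PP (k + length zs) w)"
  by (induction zs) (auto intro: step_span)

lemma PP0: "w \<in> VM.span (PP 0 w)"
proof -
  have "Y {} w \<in> PP 0 w" unfolding PP_def by auto
  then show ?thesis by (auto simp: Y_def dest: VM.span_base)
qed

lemma Yfull: "Y {..<n} w = foldr act ys w"
proof -
  have "sorted_list_of_set {..<n} = [0..<n]"
    using sorted_list_of_set_range[of 0 n] by (simp add: lessThan_atLeast0)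
  then have "Y {..<n} w = foldr (\<lambda>i. act (ys ! i)) [0..<n] w" by (simp add: Y_def)
  also have "\<dots> = foldr act (map ((!) ys) [0..<n]) w" by (simp add: foldr_map o_def)
  also have "\<dots> = foldr act ys w" by (simp add: map_nth)
  finally show ?thesis .
qed

lemma PPn: "PP n w = {foldr act ys w}"
proof -
  have "\<And>S'. S' \<subseteq> {..<n} \<Longrightarrow> card S' = n \<Longrightarrow> S' = {..<n}"
    by (metis card_lessThan card_subset_eq finite_lessThan)
  then show ?thesis unfolding PP_def using Yfull
    by (auto intro!: exI[of _ "{..<n}"])
qed

lemma top_span: "set zs \<subseteq> Cre \<Longrightarrow> length zs = n \<Longrightarrow> foldr act zs w \<in> range (\<lambda>c. sm c (foldr act ys w))"
  using C_list[OF _ PP0, of zs w] PPn VM.span_singleton by auto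

definition QQ :: "nat \<Rightarrow> 'm \<Rightarrow> 'm set" where
  "QQ k w = {foldr act zs' w | zs'. set zs' \<subseteq> Cre \<and> length zs' = k}"

lemma L4: "x \<in> g0 \<Longrightarrow> set zs \<subseteq> Cre \<Longrightarrow>
  act x (foldr act zs w) - foldr act zs (act x w) \<in> VM.span (QQ (length zs) w)"
proof (induction zs)
  case Nil
  then show ?case using VM.span_zero by simp
next
  case (Cons z zs)
  have z: "z \<in> Cre" and zs: "set zs \<subseteq> Cre" using Cons.prems by auto
  let ?F = "foldr act zs"
  define s where "s = act x (?F w) - ?F (act x w)"
  have s: "s \<in> VM.span (QQ (length zs) w)" using Cons.IH[OF Cons.prems(1) zs] s_def by simp
  have e1: "act x (act z (?F w)) = act z (act x (?F w)) + act (br x z) (?F w)"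
    using comm[OF Cons.prems(1) z] .
  have e2: "act x (?F w) = ?F (act x w) + s" using s_def by simp
  have e3: "act x (foldr act (z # zs) w) - foldr act (z # zs) (act x w) = act z s + act (br x z) (?F w)"
    using e1 e2 act_add[OF Cre_L[OF z]] by (simp add: algebra_simps)
  have t1: "act z s \<in> VM.span (QQ (length (z # zs)) w)"
  proof (rule span_act[OF Cre_L[OF z] _ s])
    fix p assume "p \<in> QQ (length zs) w"
    then obtain zs' where "p = foldr act zs' w" "set zs' \<subseteq> Cre" "length zs' = length zs"
      unfolding QQ_def by blast
    then have "act z p \<in> QQ (length (z # zs)) w" unfolding QQ_def using z
      by (auto intro!: exI[of _ "z # zs'"])
    then show "act z p \<in> VM.span (QQ (length (z # zs)) w)" by (rule VM.span_base)
  qed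
  have "br x z \<in> Cre" using brg0 Cons.prems(1) z by blast
  then have "act (br x z) (?F w) \<in> QQ (length (z # zs)) w" unfolding QQ_def using zs
    by (auto intro!: exI[of _ "br x z # zs"])
  then have t2: "act (br x z) (?F w) \<in> VM.span (QQ (length (z # zs)) w)" by (rule VM.span_base)
  show ?case unfolding e3 using t1 t2 VM.span_add by blast
qed

lemma comm_top: "x \<in> g0 \<Longrightarrow> \<exists>c. act x (foldr act ys w) = foldr act ys (act x w) + sm c (foldr act ys w)"
proof -
  assume x: "x \<in> g0"
  have "QQ n w \<subseteq> range (\<lambda>c. sm c (foldr act ys w))"
    using top_span unfolding QQ_def by auto
  then have "VM.span (QQ n w) \<subseteq> range (\<lambda>c. sm c (foldr act ys w))"
    using VM.span_minimal VM.span_singleton VM.subspace_span by metis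
  then obtain c where "act x (foldr act ys w) - foldr act ys (act x w) = sm c (foldr act ys w)"
    using L4[OF x ys_Cre, of w] by blast
  then show ?thesis by (metis add_diff_cancel_left' diff_add_cancel add.commute)
qed


lemma Fa_add: "set zs \<subseteq> Cre \<Longrightarrow> foldr act zs (a + b) = foldr act zs a + foldr act zs b"
  by (induction zs) (auto simp: act_add Cre_L)
lemma Fa_scale: "set zs \<subseteq> Cre \<Longrightarrow> foldr act zs (sm c a) = sm c (foldr act zs a)"
  by (induction zs) (auto simp: act_scale Cre_L)
lemma Fa_zero: "set zs \<subseteq> Cre \<Longrightarrow> foldr act zs 0 = 0"
  by (induction zs) (auto simp: act_zero Cre_L)
lemma FF_zero: "set l \<subseteq> {..<n} \<Longrightarrow> FF l 0 = 0"
  by (induction l) (auto simp: act_zero ysL)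
lemma Fa_par: "set zs \<subseteq> Cre \<Longrightarrow> a \<in> mpar M0 M1 e \<Longrightarrow>
   foldr act zs a \<in> mpar M0 M1 (if even (length zs) then e else \<not> e)"
proof (induction zs)
  case Nil then show ?case by simp
next
  case (Cons z zs)
  then have "foldr act zs a \<in> mpar M0 M1 (if even (length zs) then e else \<not> e)" by simp
  then have "act z (foldr act zs a) \<in> mpar M0 M1 (\<not> (if even (length zs) then e else \<not> e))"
    using par Cons.prems by simp
  then show ?case by (cases "even (length zs)") auto
qed

lemma decomp_uniq: "a0 \<in> M0 \<Longrightarrow> b0 \<in> M0 \<Longrightarrow> a1 \<in> M1 \<Longrightarrow> b1 \<in> M1 \<Longrightarrow> a0 + a1 = b0 + b1 \<Longrightarrow>
  a0 = b0 \<and> a1 = b1"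
proof -
  assume h: "a0 \<in> M0" "b0 \<in> M0" "a1 \<in> M1" "b1 \<in> M1" "a0 + a1 = b0 + b1"
  have "a0 - b0 = b1 - a1" using h(5) by (simp add: algebra_simps)
  moreover have "a0 - b0 \<in> M0" using VM.subspace_diff[OF SM_M0 h(1,2)] .
  moreover have "b1 - a1 \<in> M1" using VM.subspace_diff[OF SM_M1 h(4,3)] .
  ultimately have "a0 - b0 = 0" using SM_M01 by (metis IntI singletonD)
  then show ?thesis using h(5) by simp
qed

lemma dimCre: "VG.dim Cre = n"
  using VG.dim_span_eq_card_independent[OF ysi] yss distinct_card[OF ysd] by simp

lemma Yf_nz: "v \<noteq> 0 \<Longrightarrow> foldr act ys (iota v) \<noteq> 0"
proof
  assume v: "v \<noteq> 0" and z: "foldr act ys (iota v) = 0"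
  interpret iL: Vector_Spaces.linear sv sm iota by (rule lin)
  define f1 where "f1 = (\<lambda>S::nat set. if S = {..<n} then v else 0)"
  define f2 where "f2 = (\<lambda>S::nat set. (0::'v))"
  have P: "\<forall>S. S \<notin> Pow {..<n} \<longrightarrow> f1 S = 0" "\<forall>S. S \<notin> Pow {..<n} \<longrightarrow> f2 S = 0"
    unfolding f1_def f2_def by auto
  have s2: "(0::'m) = (\<Sum>S \<in> Pow {..<n}. Y S (iota (f2 S)))"
    unfolding f2_def by (simp add: Y_zero)
  have "(\<Sum>S \<in> Pow {..<n}. Y S (iota (f1 S))) = (\<Sum>S \<in> Pow {..<n}. if S = {..<n} then Y {..<n} (iota v) else 0)"
    by (rule sum.cong) (auto simp: f1_def Y_zero)
  also have "\<dots> = Y {..<n} (iota v)" by (simp add: sum.delta')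
  finally have s1: "(0::'m) = (\<Sum>S \<in> Pow {..<n}. Y S (iota (f1 S)))" using z Yfull by simp
  have "f1 = f2" using uniq[rule_format, of 0] P s1 s2 by blast
  then show False using v unfolding f1_def f2_def by (metis)
qed

lemma top_nz: "\<exists>t \<in> top_part sg Cre sm act iota. t \<noteq> 0"
proof -
  have "(UNIV::'v set) \<noteq> {0}" using V unfolding simple_supermodule_def simple_sub_def by blast
  then obtain v :: 'v where v: "v \<noteq> 0" by blast
  have "foldr act ys (iota v) \<in> top_part sg Cre sm act iota"
    unfolding top_part_def using dimCre ys_Cre by (auto intro!: VM.span_base)
  then show ?thesis using Yf_nz[OF v] by blast
qed


theorem core_main:
  assumes N: "sub_supermodule UNIV sm M0 M1 act N" and Nz: "N \<noteq> {0}"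
  shows "top_part sg Cre sm act iota \<subseteq> N"
proof -
  interpret iL: Vector_Spaces.linear sv sm iota by (rule lin)
  have Nh: "VM.subspace N \<and> (\<forall>x \<in> UNIV. act x ` N \<subseteq> N) \<and> N = sum_set (N \<inter> M0) (N \<inter> M1)"
    using N unfolding sub_supermodule_def .
  note subN = conjunct1[OF Nh] and clN0 = conjunct1[OF conjunct2[OF Nh]]
    and grN = conjunct2[OF conjunct2[OF Nh]]
  have clN: "\<And>x m. m \<in> N \<Longrightarrow> act x m \<in> N" using clN0 by blast
  have FFN: "\<And>l m. m \<in> N \<Longrightarrow> FF l m \<in> N"
  proof -
    fix l m show "m \<in> N \<Longrightarrow> FF l m \<in> N" by (induction l) (auto intro: clN)
  qed
  let ?Yf = "foldr act ys"
  obtain m where m: "m \<in> N" "m \<noteq> 0"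
  proof -
    have "\<not> N \<subseteq> {0}" using Nz VM.subspace_0[OF subN] by blast
    then show ?thesis using that by blast
  qed
  obtain f where fh: "(\<forall>S. S \<notin> Pow {..<n} \<longrightarrow> f S = 0) \<and> m = (\<Sum>S \<in> Pow {..<n}. Y S (iota (f S)))"
    using ex1_implies_ex[OF spec[OF uniq, of m]] by (elim exE)
  have fm: "m = (\<Sum>S \<in> Pow {..<n}. Y S (iota (f S)))" using fh by (rule conjunct2)
  obtain S1 where S1: "S1 \<in> Pow {..<n} \<and> f S1 \<noteq> 0"
  proof (rule ccontr)
    assume "\<not> thesis"
    then have "\<forall>S \<in> Pow {..<n}. f S = 0" using that by blast
    then have "(\<Sum>S \<in> Pow {..<n}. Y S (iota (f S))) = 0" by (simp add: Y_zero)
    then show False using m fm by simp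
  qed
  obtain S0 where S0: "S0 \<in> Pow {..<n} \<and> f S0 \<noteq> 0"
    and S0min: "\<forall>S. S \<in> Pow {..<n} \<and> f S \<noteq> 0 \<longrightarrow> card S0 \<le> card S"
    using ex_has_least_nat[of "\<lambda>S. S \<in> Pow {..<n} \<and> f S \<noteq> 0" S1 card] S1 by blast
  define v0 where "v0 = f S0"
  define l where "l = sorted_list_of_set ({..<n} - S0)"
  have setl: "set l = {..<n} - S0" unfolding l_def by simp
  have dl: "distinct l" unfolding l_def by simp
  have ln: "set l \<subseteq> {..<n}" using setl by auto
  have S0n: "S0 \<subseteq> {..<n}" using S0 by auto
  have others: "\<And>S. S \<in> Pow {..<n} - {S0} \<Longrightarrow> FF l (Y S (iota (f S))) = 0"
  proof -
    fix S assume S: "S \<in> Pow {..<n} - {S0}"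
    then have Sn: "S \<subseteq> {..<n}" by auto
    note B = B_list[OF dl ln Sn, of "iota (f S)"]
    show "FF l (Y S (iota (f S))) = 0"
    proof (cases "set l \<inter> S = {}")
      case False then show ?thesis using B by simp
    next
      case True
      then have "S \<subseteq> S0" using Sn setl by blast
      moreover have "S \<noteq> S0" using S by blast
      ultimately have "S \<subset> S0" by blast
      then have cS: "card S < card S0" using psubset_card_mono[OF finite_subset[OF S0n finite_lessThan]] by blast
      have "f S = 0"
      proof (rule ccontr)
        assume "f S \<noteq> 0"
        then have "card S0 \<le> card S" using S0min S by blast
        then show False using cS by simp
      qed
      then show ?thesis using Y_zero[OF Sn] FF_zero[OF ln] by simp
    qed
  qed
  have "FF l m = (\<Sum>S \<in> Pow {..<n}. FF l (Y S (iota (f S))))" unfolding fm using FF_sum[OF ln] .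
  also have "\<dots> = FF l (Y S0 (iota (f S0)))"
    using sum.remove[of "Pow {..<n}" S0 "\<lambda>S. FF l (Y S (iota (f S)))"] S0 others by simp
  finally have e1: "FF l m = FF l (Y S0 (iota v0))" unfolding v0_def .
  have "set l \<inter> S0 = {}" "set l \<union> S0 = {..<n}" using setl S0n by auto
  then have "pm (FF l m) (?Yf (iota v0))" using B_list[OF dl ln S0n, of "iota v0"] e1 Yfull by simp
  moreover have "FF l m \<in> N" using FFN[OF m(1)] .
  ultimately have Yv0: "?Yf (iota v0) \<in> N"
  proof (unfold pm_def, elim disjE)
    assume "FF l m = ?Yf (iota v0)" "FF l m \<in> N" then show ?thesis by simp
  next
    assume "FF l m = - ?Yf (iota v0)" "FF l m \<in> N"
    then have "- FF l m \<in> N" using VM.subspace_neg[OF subN] by blast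
    then show ?thesis using \<open>FF l m = - ?Yf (iota v0)\<close> by simp
  qed
  have v0nz: "v0 \<noteq> 0" using S0 v0_def by simp
  define W where "W = {v. ?Yf (iota v) \<in> N}"
  have Vh: "supermodule sg br g0 {0} sv V0 V1 rho \<and> simple_sub (sum_set g0 {0}) sv V0 V1 rho UNIV"
    using V unfolding simple_supermodule_def .
  note Vsm = conjunct1[OF Vh] and Vss = conjunct2[OF Vh]
  have VV3: "sum_set V0 V1 = UNIV"
    using Vsm unfolding supermodule_def by (elim conjE) assumption
  have Vsimp: "\<forall>N'. sub_supermodule (sum_set g0 {0}) sv V0 V1 rho N' \<and> N' \<subseteq> UNIV \<longrightarrow> N' = {0} \<or> N' = UNIV"
    using Vss unfolding simple_sub_def by (elim conjE) assumption
  have subW: "VV.subspace W"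
  proof (rule VV.subspaceI)
    show "0 \<in> W" unfolding W_def using Fa_zero[OF ys_Cre] VM.subspace_0[OF subN] by simp
  next
    fix x y assume "x \<in> W" "y \<in> W"
    then show "x + y \<in> W" unfolding W_def using Fa_add[OF ys_Cre] iL.add VM.subspace_add[OF subN]
      by simp
  next
    fix c x assume "x \<in> W"
    then show "sv c x \<in> W" unfolding W_def using Fa_scale[OF ys_Cre] iL.scale VM.subspace_scale[OF subN]
      by simp
  qed
  have actW: "\<forall>x \<in> sum_set g0 {0}. rho x ` W \<subseteq> W"
  proof (intro ballI subsetI)
    fix x y assume x: "x \<in> sum_set g0 {0}" and y: "y \<in> rho x ` W"
    from x have xg: "x \<in> g0" unfolding sum_set_def by auto
    from y obtain v where v: "v \<in> W" "y = rho x v" by blast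
    obtain c where c: "act x (?Yf (iota v)) = ?Yf (act x (iota v)) + sm c (?Yf (iota v))"
      using comm_top[OF xg] by blast
    have "?Yf (iota (rho x v)) = act x (?Yf (iota v)) - sm c (?Yf (iota v))"
      using c g0act xg by simp
    moreover have "act x (?Yf (iota v)) \<in> N" using clN v W_def by simp
    moreover have "sm c (?Yf (iota v)) \<in> N" using VM.subspace_scale[OF subN] v W_def by simp
    ultimately show "y \<in> W" unfolding W_def using v VM.subspace_diff[OF subN] by simp
  qed
  have grW: "W = sum_set (W \<inter> V0) (W \<inter> V1)"
  proof
    show "sum_set (W \<inter> V0) (W \<inter> V1) \<subseteq> W"
      unfolding sum_set_def using VV.subspace_add[OF subW] by auto
  next
    show "W \<subseteq> sum_set (W \<inter> V0) (W \<inter> V1)"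
    proof
      fix v assume v: "v \<in> W"
      obtain v0' v1 where vv: "v0' \<in> V0" "v1 \<in> V1" "v = v0' + v1"
        using VV3 unfolding sum_set_def by blast
      have "?Yf (iota v) \<in> N" using v W_def by simp
      then have "?Yf (iota v) \<in> sum_set (N \<inter> M0) (N \<inter> M1)" by (rule mem_eq[OF grN])
      then obtain b0 b1 where b: "b0 \<in> N \<inter> M0" "b1 \<in> N \<inter> M1" "?Yf (iota v) = b0 + b1"
        unfolding sum_set_def by blast
      have sp: "?Yf (iota v) = ?Yf (iota v0') + ?Yf (iota v1)"
        using vv Fa_add[OF ys_Cre] iL.add by simp
      have p0: "?Yf (iota v0') \<in> mpar M0 M1 (if even n then False else True)"
        using Fa_par[OF ys_Cre, of "iota v0'" False] iV0 vv by (auto simp: mpar_def)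
      have p1: "?Yf (iota v1) \<in> mpar M0 M1 (if even n then True else False)"
        using Fa_par[OF ys_Cre, of "iota v1" True] iV1 vv by (auto simp: mpar_def)
      have "?Yf (iota v0') \<in> N \<and> ?Yf (iota v1) \<in> N"
      proof (cases "even n")
        case True
        then show ?thesis using p0 p1 b sp decomp_uniq[of "?Yf (iota v0')" b0 "?Yf (iota v1)" b1]
          by (auto simp: mpar_def)
      next
        case False
        then show ?thesis using p0 p1 b sp decomp_uniq[of "?Yf (iota v1)" b0 "?Yf (iota v0')" b1]
          by (auto simp: mpar_def add.commute)
      qed
      then show "v \<in> sum_set (W \<inter> V0) (W \<inter> V1)" unfolding sum_set_def W_def using vv by blast
    qed
  qed
  have "sub_supermodule (sum_set g0 {0}) sv V0 V1 rho W"
    unfolding sub_supermodule_def using subW actW grW by blast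
  moreover have "W \<noteq> {0}" using Yv0 v0nz W_def by auto
  ultimately have WU: "W = UNIV" using Vsimp by blast
  show ?thesis unfolding top_part_def
  proof (rule VM.span_minimal[OF _ subN], rule subsetI)
    fix t assume "t \<in> {foldr act zs (iota v) | zs v. length zs = vector_space.dim sg Cre \<and> set zs \<subseteq> Cre}"
    then obtain zs v where t: "t = foldr act zs (iota v)" "length zs = n" "set zs \<subseteq> Cre"
      using dimCre by auto
    obtain c where "t = sm c (?Yf (iota v))" using top_span[OF t(3) t(2), of "iota v"] t(1) by auto
    moreover have "?Yf (iota v) \<in> N" using WU W_def by auto
    ultimately show "t \<in> N" using VM.subspace_scale[OF subN] by simp
  qed
qed

end

lemma abstract:
  fixes sm :: "complex \<Rightarrow> 'm::ab_group_add \<Rightarrow> 'm" and act :: "'g::ab_group_add \<Rightarrow> 'm \<Rightarrow> 'm"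
  assumes SM: "supermodule sg br Ev Od sm M0 M1 act"
    and T: "\<exists>t\<in>T. t \<noteq> 0"
    and all: "\<forall>N. sub_supermodule UNIV sm M0 M1 act N \<and> N \<noteq> {0} \<longrightarrow> T \<subseteq> N"
  shows "socle UNIV sm M0 M1 act = generated_sub UNIV sm M0 M1 act T
      \<and> simple_sub UNIV sm M0 M1 act (socle UNIV sm M0 M1 act)
      \<and> indecomposable UNIV sm M0 M1 act"
proof -
  have vs: "vector_space sm" using SM unfolding supermodule_def by (elim conjE) assumption
  interpret VM: vector_space sm by (rule vs)
  have M0: "VM.subspace M0" using SM unfolding supermodule_def by (elim conjE) assumption
  have M1: "VM.subspace M1" using SM unfolding supermodule_def by (elim conjE) assumption
  have M01: "M0 \<inter> M1 = {0}" using SM unfolding supermodule_def by (elim conjE) assumption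
  have MU: "sum_set M0 M1 = UNIV" using SM unfolding supermodule_def by (elim conjE) assumption
  have du: "\<And>a0 b0 a1 b1. a0 \<in> M0 \<Longrightarrow> b0 \<in> M0 \<Longrightarrow> a1 \<in> M1 \<Longrightarrow> b1 \<in> M1 \<Longrightarrow> a0 + a1 = b0 + b1 \<Longrightarrow>
    a0 = b0 \<and> a1 = b1"
  proof -
    fix a0 b0 a1 b1
    assume h: "a0 \<in> M0" "b0 \<in> M0" "a1 \<in> M1" "b1 \<in> M1" "a0 + a1 = b0 + b1"
    have "a0 - b0 = b1 - a1" using h(5) by (simp add: algebra_simps)
    moreover have "a0 - b0 \<in> M0" using VM.subspace_diff[OF M0 h(1,2)] .
    moreover have "b1 - a1 \<in> M1" using VM.subspace_diff[OF M1 h(4,3)] .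
    ultimately have "a0 - b0 = 0" using M01 by (metis IntI singletonD)
    then show "a0 = b0 \<and> a1 = b1" using h(5) by simp
  qed
  let ?sub = "sub_supermodule UNIV sm M0 M1 act"
  define F where "F = {N. ?sub N \<and> T \<subseteq> N}"
  define G where "G = \<Inter>F"
  have Gdef: "generated_sub UNIV sm M0 M1 act T = G" unfolding G_def F_def generated_sub_def by simp
  have Fsub: "\<And>N. N \<in> F \<Longrightarrow> VM.subspace N \<and> (\<forall>x. act x ` N \<subseteq> N) \<and> N = sum_set (N \<inter> M0) (N \<inter> M1)"
    unfolding F_def sub_supermodule_def by blast
  have subG: "VM.subspace G"
  proof (rule VM.subspaceI)
    show "0 \<in> G" unfolding G_def using Fsub VM.subspace_0 by blast
  next
    fix x y assume "x \<in> G" "y \<in> G" then show "x + y \<in> G" unfolding G_def using Fsub VM.subspace_add by blast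
  next
    fix c x assume "x \<in> G" then show "sm c x \<in> G" unfolding G_def using Fsub VM.subspace_scale by blast
  qed
  have actG: "\<forall>x \<in> UNIV. act x ` G \<subseteq> G" unfolding G_def using Fsub by blast
  have grG: "G = sum_set (G \<inter> M0) (G \<inter> M1)"
  proof
    show "sum_set (G \<inter> M0) (G \<inter> M1) \<subseteq> G" unfolding sum_set_def using VM.subspace_add[OF subG] by auto
  next
    show "G \<subseteq> sum_set (G \<inter> M0) (G \<inter> M1)"
    proof
      fix m assume m: "m \<in> G"
      have "m \<in> sum_set M0 M1" using MU by simp
      then obtain a0 a1 where a: "a0 \<in> M0" "a1 \<in> M1" "m = a0 + a1" unfolding sum_set_def by blast
      have "\<forall>N \<in> F. a0 \<in> N \<and> a1 \<in> N"
      proof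
        fix N assume N: "N \<in> F"
        have "m \<in> N" using m N unfolding G_def by blast
        then have "m \<in> sum_set (N \<inter> M0) (N \<inter> M1)" using mem_eq[OF conjunct2[OF conjunct2[OF Fsub[OF N]]]] by blast
        then obtain b0 b1 where b: "b0 \<in> N \<inter> M0" "b1 \<in> N \<inter> M1" "m = b0 + b1" unfolding sum_set_def by blast
        then have "a0 = b0 \<and> a1 = b1" using du[of a0 b0 a1 b1] a by simp
        then show "a0 \<in> N \<and> a1 \<in> N" using b by simp
      qed
      then have "a0 \<in> G" "a1 \<in> G" unfolding G_def by auto
      then show "m \<in> sum_set (G \<inter> M0) (G \<inter> M1)" unfolding sum_set_def using a by blast
    qed
  qed
  have Gsub: "?sub G" unfolding sub_supermodule_def using subG actG grG by blast
  have TG: "T \<subseteq> G" unfolding G_def F_def by blast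
  have Gnz: "G \<noteq> {0}" using T TG by blast
  have Gmin: "\<And>N. ?sub N \<Longrightarrow> T \<subseteq> N \<Longrightarrow> G \<subseteq> N" unfolding G_def F_def by blast
  have simpG: "simple_sub UNIV sm M0 M1 act G"
    unfolding simple_sub_def using Gsub Gnz Gmin all by blast
  have onlyG: "{N. simple_sub UNIV sm M0 M1 act N} = {G}"
  proof
    show "{G} \<subseteq> {N. simple_sub UNIV sm M0 M1 act N}" using simpG by simp
  next
    show "{N. simple_sub UNIV sm M0 M1 act N} \<subseteq> {G}"
    proof
      fix N assume "N \<in> {N. simple_sub UNIV sm M0 M1 act N}"
      then have N: "?sub N" "N \<noteq> {0}" "\<forall>N'. ?sub N' \<and> N' \<subseteq> N \<longrightarrow> N' = {0} \<or> N' = N"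
        unfolding simple_sub_def by blast+
      have "G \<subseteq> N" using Gmin N all by blast
      then show "N \<in> {G}" using N(3) Gsub Gnz by blast
    qed
  qed
  have soc: "socle UNIV sm M0 M1 act = G"
    unfolding socle_def onlyG using VM.span_eq_iff subG by simp
  have indec: "indecomposable UNIV sm M0 M1 act"
    unfolding indecomposable_def
  proof
    show "(UNIV :: 'm set) \<noteq> {0}" using T by blast
  next
    show "\<not> (\<exists>N1 N2. ?sub N1 \<and> ?sub N2 \<and> N1 \<noteq> {0} \<and> N2 \<noteq> {0} \<and> N1 \<inter> N2 = {0} \<and> sum_set N1 N2 = UNIV)"
    proof
      assume "\<exists>N1 N2. ?sub N1 \<and> ?sub N2 \<and> N1 \<noteq> {0} \<and> N2 \<noteq> {0} \<and> N1 \<inter> N2 = {0} \<and> sum_set N1 N2 = UNIV"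
      then obtain N1 N2 where h: "?sub N1" "?sub N2" "N1 \<noteq> {0}" "N2 \<noteq> {0}" "N1 \<inter> N2 = {0}" by blast
      have "T \<subseteq> N1" "T \<subseteq> N2" using all h by blast+
      then show False using h(5) T by blast
    qed
  qed
  show ?thesis using soc Gdef simpG indec by simp
qed

theorem lemma3p2:
  fixes sg :: "complex \<Rightarrow> 'g::ab_group_add \<Rightarrow> 'g" and br :: "'g \<Rightarrow> 'g \<Rightarrow> 'g"
    and gm g0 gp :: "'g set"
    and sv :: "complex \<Rightarrow> 'v::ab_group_add \<Rightarrow> 'v" and V0 V1 :: "'v set"
    and rho :: "'g \<Rightarrow> 'v \<Rightarrow> 'v"
    and sm :: "complex \<Rightarrow> 'm::ab_group_add \<Rightarrow> 'm" and M0 M1 :: "'m set"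
    and act :: "'g \<Rightarrow> 'm \<Rightarrow> 'm" and iota :: "'v \<Rightarrow> 'm"
    and sn :: "complex \<Rightarrow> 'n::ab_group_add \<Rightarrow> 'n" and N0 N1 :: "'n set"
    and act' :: "'g \<Rightarrow> 'n \<Rightarrow> 'n" and iota' :: "'v \<Rightarrow> 'n"
  assumes g: "graded_lie_superalgebra sg br gm g0 gp"
    and fin: "finite_dim sg (sum_set gm gp)"
    and V: "simple_supermodule sg br g0 {0} sv V0 V1 rho"
    and K: "induced_module sg br gm g0 gp sv V0 V1 rho sm M0 M1 act iota"
    and K': "induced_module sg br gp g0 gm sv V0 V1 rho sn N0 N1 act' iota'"
  shows "(\<forall>N. sub_supermodule UNIV sm M0 M1 act N \<and> N \<noteq> {0} \<longrightarrow>
             top_part sg gm sm act iota \<subseteq> N)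
      \<and> socle UNIV sm M0 M1 act = generated_sub UNIV sm M0 M1 act (top_part sg gm sm act iota)
      \<and> simple_sub UNIV sm M0 M1 act (socle UNIV sm M0 M1 act)
      \<and> simple_sub UNIV sn N0 N1 act' (socle UNIV sn N0 N1 act')
      \<and> indecomposable UNIV sm M0 M1 act
      \<and> indecomposable UNIV sn N0 N1 act'"
proof -
  have vsg: "vector_space sg" using g unfolding graded_lie_superalgebra_def by (elim conjE) assumption
  interpret VG: vector_space sg by (rule vsg)
  have sgm: "VG.subspace gm" using g unfolding graded_lie_superalgebra_def by (elim conjE) assumption
  have sg0: "VG.subspace g0" using g unfolding graded_lie_superalgebra_def by (elim conjE) assumption
  have sgp: "VG.subspace gp" using g unfolding graded_lie_superalgebra_def by (elim conjE) assumption
  have b1: "\<forall>x \<in> g0. \<forall>y \<in> gm. br x y \<in> gm" using g unfolding graded_lie_superalgebra_def by (elim conjE) assumption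
  have b2: "\<forall>x \<in> g0. \<forall>y \<in> gp. br x y \<in> gp" using g unfolding graded_lie_superalgebra_def by (elim conjE) assumption
  have b3: "\<forall>x \<in> gm. \<forall>y \<in> gm. br x y = 0" using g unfolding graded_lie_superalgebra_def by (elim conjE) assumption
  have b4: "\<forall>x \<in> gp. \<forall>y \<in> gp. br x y = 0" using g unfolding graded_lie_superalgebra_def by (elim conjE) assumption
  have Vsm: "supermodule sg br g0 {0} sv V0 V1 rho" using V unfolding simple_supermodule_def by (elim conjE) assumption
  have vsv: "vector_space sv" using Vsm unfolding supermodule_def by (elim conjE) assumption
  have KS: "supermodule sg br g0 (sum_set gm gp) sm M0 M1 act" using K unfolding induced_module_def by (elim conjE) assumption
  have vsm: "vector_space sm" using KS unfolding supermodule_def by (elim conjE) assumption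
  have Kl: "Vector_Spaces.linear sv sm iota" using K unfolding induced_module_def by (elim conjE) assumption
  have Ki0: "iota ` V0 \<subseteq> M0" using K unfolding induced_module_def by (elim conjE) assumption
  have Ki1: "iota ` V1 \<subseteq> M1" using K unfolding induced_module_def by (elim conjE) assumption
  have Kg: "\<forall>x \<in> g0. \<forall>v. act x (iota v) = iota (rho x v)" using K unfolding induced_module_def by (elim conjE) assumption
  have Kex: "\<exists>ys. distinct ys \<and> module.independent sg (set ys) \<and> module.span sg (set ys) = gm \<and>
        (\<forall>m. \<exists>!f :: nat set \<Rightarrow> 'v.
           (\<forall>S. S \<notin> Pow {..<length ys} \<longrightarrow> f S = 0) \<and>
           m = (\<Sum>S \<in> Pow {..<length ys}. yprod act ys S (iota (f S))))"
    using K unfolding induced_module_def by (elim conjE) assumption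
  then obtain ys where ys: "distinct ys" "VG.independent (set ys)" "VG.span (set ys) = gm"
    "\<forall>m. \<exists>!f :: nat set \<Rightarrow> 'v.
           (\<forall>S. S \<notin> Pow {..<length ys} \<longrightarrow> f S = 0) \<and>
           m = (\<Sum>S \<in> Pow {..<length ys}. yprod act ys S (iota (f S)))" by blast
  have c1: "core sm sg sv br gm g0 gp V0 V1 rho M0 M1 act iota ys"
    by (rule core.intro[OF vsm vsg vsv core_axioms.intro[OF KS Kl Ki0 Ki1 Kg ys V
        VG.subspace_0[OF sg0] VG.subspace_0[OF sgp] b3 b1]])
  have KS': "supermodule sg br g0 (sum_set gp gm) sn N0 N1 act'" using K' unfolding induced_module_def by (elim conjE) assumption
  have vsn: "vector_space sn" using KS' unfolding supermodule_def by (elim conjE) assumption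
  have Kl': "Vector_Spaces.linear sv sn iota'" using K' unfolding induced_module_def by (elim conjE) assumption
  have Ki0': "iota' ` V0 \<subseteq> N0" using K' unfolding induced_module_def by (elim conjE) assumption
  have Ki1': "iota' ` V1 \<subseteq> N1" using K' unfolding induced_module_def by (elim conjE) assumption
  have Kg': "\<forall>x \<in> g0. \<forall>v. act' x (iota' v) = iota' (rho x v)" using K' unfolding induced_module_def by (elim conjE) assumption
  have Kex': "\<exists>ys. distinct ys \<and> module.independent sg (set ys) \<and> module.span sg (set ys) = gp \<and>
        (\<forall>m. \<exists>!f :: nat set \<Rightarrow> 'v.
           (\<forall>S. S \<notin> Pow {..<length ys} \<longrightarrow> f S = 0) \<and>
           m = (\<Sum>S \<in> Pow {..<length ys}. yprod act' ys S (iota' (f S))))"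
    using K' unfolding induced_module_def by (elim conjE) assumption
  then obtain zs where zs: "distinct zs" "VG.independent (set zs)" "VG.span (set zs) = gp"
    "\<forall>m. \<exists>!f :: nat set \<Rightarrow> 'v.
           (\<forall>S. S \<notin> Pow {..<length zs} \<longrightarrow> f S = 0) \<and>
           m = (\<Sum>S \<in> Pow {..<length zs}. yprod act' zs S (iota' (f S)))" by blast
  have c2: "core sn sg sv br gp g0 gm V0 V1 rho N0 N1 act' iota' zs"
    by (rule core.intro[OF vsn vsg vsv core_axioms.intro[OF KS' Kl' Ki0' Ki1' Kg' zs V
        VG.subspace_0[OF sg0] VG.subspace_0[OF sgm] b4 b2]])
  have m1: "\<forall>N. sub_supermodule UNIV sm M0 M1 act N \<and> N \<noteq> {0} \<longrightarrow> top_part sg gm sm act iota \<subseteq> N"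
    using core.core_main[OF c1] by blast
  have m2: "\<forall>N. sub_supermodule UNIV sn N0 N1 act' N \<and> N \<noteq> {0} \<longrightarrow> top_part sg gp sn act' iota' \<subseteq> N"
    using core.core_main[OF c2] by blast
  note A1 = abstract[OF KS core.top_nz[OF c1] m1]
  note A2 = abstract[OF KS' core.top_nz[OF c2] m2]
  show ?thesis using m1 A1 A2 by blast
qed

end
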